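(* For every $\beta>0$, the origin is the unique equilibrium of the ODE $\dot x=f(x)$ on $\mathbb R^n\times\mathbb R^n$, $$f(x_1,x_2)=\begin{bmatrix}-(1+\beta)Dx_1+\beta Dx_2+\gamma DP\big(M(x_2+Q^* )-M(Q^* )\big)\\ -(1+\beta)Dx_2+\beta Dx_1+\gamma DP\big(M(x_1+Q^* )-M(Q^* )\big)\end{bmatrix},$$ and every solution converges to the origin as $t\to\infty$. Equivalently, every solution of $\dot Q^A=DR+\gamma DPM(Q^B)-(1+\beta)DQ^A+\beta DQ^B$, $\dot Q^B=DR+\gamma DPM(Q^A)-(1+\beta)DQ^B+\beta DQ^A$ satisfies $(Q^A(t),Q^B(t))\to(Q^*,Q^* )$.
   Context: Finite MDP with states $\mathcal S$, actions $\mathcal A$, kernel $P$, expected reward vector $R\in\mathbb R^n$, discount $\gamma\in[0,1)$; $n=|\mathcal S||\mathcal A|$. $D$ is the diagonal matrix of a probability distribution $d$ on $\mathcal S\times\mathcal A$ with $d(s,a)>0$; $P$ is the $n\times|\mathcal S|$ matrix with row $(s,a)$ equal to $P(\cdot\mid s,a)$; $M(Q)(s)=\max_aQ(s,a)$; $Q^*=R+\gamma PM(Q^* )$ is the optimal Q-function. *)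

theory Defs
  imports "HOL-Analysis.Analysis"
begin

text \<open>Q-functions are vectors indexed by state-action pairs, i.e. elements of
  real^('s \<times> 'a) with finite state type 's and finite action type 'a (n = |S||A|).
  The transition kernel is the n x |S| matrix P with row (s,a) equal to P(.|s,a).\<close>

definition diag_mat :: "real^'n \<Rightarrow> real^'n^'n" where
  "diag_mat d = (\<chi> i j. if i = j then d $ i else 0)"

definition Mmax :: "real^('s::finite \<times> 'a::finite) \<Rightarrow> real^'s" where
  "Mmax Q = (\<chi> s. Max (range (\<lambda>a. Q $ (s, a))))"

definition err_field ::
  "real^('s::finite \<times> 'a::finite) \<Rightarrow> real^'s^('s \<times> 'a) \<Rightarrow> real \<Rightarrow> real
   \<Rightarrow> real^('s \<times> 'a) \<Rightarrow> (real^('s \<times> 'a)) \<times> (real^('s \<times> 'a))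
   \<Rightarrow> (real^('s \<times> 'a)) \<times> (real^('s \<times> 'a))" where
  "err_field d P \<gamma> \<beta> Qs x =
     (let D = diag_mat d; x1 = fst x; x2 = snd x in
      (- (1 + \<beta>) *\<^sub>R (D *v x1) + \<beta> *\<^sub>R (D *v x2)
         + \<gamma> *\<^sub>R (D *v (P *v (Mmax (x2 + Qs) - Mmax Qs))),
       - (1 + \<beta>) *\<^sub>R (D *v x2) + \<beta> *\<^sub>R (D *v x1)
         + \<gamma> *\<^sub>R (D *v (P *v (Mmax (x1 + Qs) - Mmax Qs)))))"

definition qab_field ::
  "real^('s::finite \<times> 'a::finite) \<Rightarrow> real^'s^('s \<times> 'a) \<Rightarrow> real^('s \<times> 'a) \<Rightarrow> real \<Rightarrow> real
   \<Rightarrow> (real^('s \<times> 'a)) \<times> (real^('s \<times> 'a))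
   \<Rightarrow> (real^('s \<times> 'a)) \<times> (real^('s \<times> 'a))" where
  "qab_field d P R \<gamma> \<beta> q =
     (let D = diag_mat d; QA = fst q; QB = snd q in
      (D *v R + \<gamma> *\<^sub>R (D *v (P *v Mmax QB)) - (1 + \<beta>) *\<^sub>R (D *v QA) + \<beta> *\<^sub>R (D *v QB),
       D *v R + \<gamma> *\<^sub>R (D *v (P *v Mmax QA)) - (1 + \<beta>) *\<^sub>R (D *v QB) + \<beta> *\<^sub>R (D *v QA)))"

end

theory Submission imports Defs begin
definition cmp :: "bool \<times> bool \<times> 'i \<Rightarrow> (real^'i::finite) \<times> (real^'i) \<Rightarrow> real" where
  "cmp k z = (if fst (snd k) then 1 else -1) * ((if fst k then fst z else snd z) $ snd (snd k))"

lemma diag_mv: "(diag_mat d *v v) $ i = d $ i * v $ i"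
proof -
  have "(diag_mat d *v v) $ i = (\<Sum>j\<in>UNIV. if i = j then d $ i * v $ i else 0)"
    unfolding diag_mat_def matrix_vector_mult_def by (simp only: vec_lambda_beta, rule sum.cong) auto
  then show ?thesis by simp
qed

lemma Mmax_bound:
  assumes "\<forall>a. \<bar>x $ (s,a)\<bar> \<le> B"
  shows "\<bar>(Mmax (x + Q) - Mmax Q) $ s\<bar> \<le> B"
proof -
  have 1: "Max (range (\<lambda>a. (x+Q) $ (s, a))) \<le> Max (range (\<lambda>a. Q $ (s, a))) + B"
  proof (subst Max_le_iff, auto)
    fix a
    have "Q $ (s,a) \<le> Max (range (\<lambda>a. Q $ (s, a)))" by (rule Max_ge) auto
    moreover have "x $ (s,a) \<le> B" using assms abs_le_D1 by blast
    ultimately show "x $ (s, a) + Q $ (s, a) \<le> Max (range (\<lambda>a. Q $ (s, a))) + B"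
      by linarith
  qed
  have 2: "Max (range (\<lambda>a. Q $ (s, a))) \<le> Max (range (\<lambda>a. (x+Q) $ (s, a))) + B"
  proof (subst Max_le_iff, auto)
    fix a
    have "x $ (s,a) + Q $ (s,a) \<le> Max (range (\<lambda>a. x $ (s, a) + Q $ (s, a)))" by (rule Max_ge) auto
    moreover have "- x $ (s,a) \<le> B" using assms abs_le_D2 by blast
    ultimately show "Q $ (s, a) \<le> Max (range (\<lambda>a. x $ (s, a) + Q $ (s, a))) + B"
      by linarith
  qed
  have e: "(Mmax (x+Q) - Mmax Q) $ s = Max (range (\<lambda>a. (x+Q) $ (s, a))) - Max (range (\<lambda>a. Q $ (s, a)))"
    by (simp add: Mmax_def)
  show ?thesis unfolding e abs_le_iff using 1 2 by linarith
qed

lemma Pmv_bound: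
  assumes "\<forall>i j. P $ i $ j \<ge> (0::real)" "\<forall>i. (\<Sum>j\<in>UNIV. P $ i $ j) = 1"
    and "\<forall>s. \<bar>w $ s\<bar> \<le> B"
  shows "\<bar>(P *v w) $ i\<bar> \<le> B"
proof -
  have "\<bar>(P *v w) $ i\<bar> = \<bar>\<Sum>j\<in>UNIV. P $ i $ j * w $ j\<bar>" by (simp add: matrix_vector_mult_def)
  also have "\<dots> \<le> (\<Sum>j\<in>UNIV. \<bar>P $ i $ j * w $ j\<bar>)" by (rule sum_abs)
  also have "\<dots> \<le> (\<Sum>j\<in>UNIV. P $ i $ j * B)"
    by (rule sum_mono) (use assms in \<open>auto simp: abs_mult intro: mult_left_mono\<close>)
  also have "\<dots> = B" using assms(2) by (simp add: sum_distrib_right[symmetric])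
  finally show ?thesis .
qed

lemma err_fst: "fst (err_field d P \<gamma> \<beta> Qs z) $ i = d$i * (-(1+\<beta>) * fst z $ i + \<beta> * snd z $ i
   + \<gamma> * (P *v (Mmax (snd z + Qs) - Mmax Qs)) $ i)"
  by (simp add: err_field_def Let_def diag_mv algebra_simps)

lemma err_snd: "snd (err_field d P \<gamma> \<beta> Qs z) $ i = d$i * (-(1+\<beta>) * snd z $ i + \<beta> * fst z $ i
   + \<gamma> * (P *v (Mmax (fst z + Qs) - Mmax Qs)) $ i)"
  by (simp add: err_field_def Let_def diag_mv algebra_simps)

lemma core:
  fixes z :: "(real^('s::finite \<times> 'a::finite)) \<times> (real^('s \<times> 'a))"
  assumes dpos: "\<forall>i. d$i > 0" and Pn: "\<forall>i j. P $ i $ j \<ge> 0" and Pr: "\<forall>i. (\<Sum>j\<in>UNIV. P $ i $ j) = 1"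
    and g: "0 \<le> \<gamma>" and b: "0 \<le> \<beta>"
    and all: "\<forall>k. cmp k z \<le> B" and eq: "cmp k0 z = B"
  shows "cmp k0 (err_field d P \<gamma> \<beta> Qs z) \<le> -(d $ snd (snd k0)) * (1-\<gamma>) * B"
proof -
  obtain bl sg i where k0: "k0 = (bl,sg,i)" by (cases k0) auto
  define s :: real where "s = (if sg then 1 else -1)"
  define u where "u = (if bl then fst z else snd z)"
  define v where "v = (if bl then snd z else fst z)"
  have uB: "s * u$i = B" using eq unfolding k0 cmp_def s_def u_def by simp
  have "cmp (\<not>bl, sg, i) z \<le> B" using all by blast
  then have vB: "s * v$i \<le> B" unfolding cmp_def s_def v_def by (cases bl) auto
  have vabs: "\<forall>j. \<bar>v$j\<bar> \<le> B"
  proof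
    fix j
    have "cmp (\<not>bl, True, j) z \<le> B" "cmp (\<not>bl, False, j) z \<le> B" using all by blast+
    then show "\<bar>v$j\<bar> \<le> B" unfolding cmp_def v_def by (cases bl) auto
  qed
  define G where "G = (P *v (Mmax (v + Qs) - Mmax Qs)) $ i"
  have Gb: "\<bar>G\<bar> \<le> B" unfolding G_def
    by (rule Pmv_bound[OF Pn Pr]) (use vabs Mmax_bound in blast)
  have s1: "s * s = 1" "\<bar>s\<bar> = 1" unfolding s_def by auto
  have sG: "s * G \<le> B" proof -
    have "s * G \<le> \<bar>s * G\<bar>" by simp
    also have "\<dots> = \<bar>G\<bar>" using s1 by (simp add: abs_mult)
    finally show ?thesis using Gb by linarith
  qed
  have ce: "cmp k0 (err_field d P \<gamma> \<beta> Qs z) = s * (d$i * (-(1+\<beta>) * u$i + \<beta> * v$i + \<gamma> * G))"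
    unfolding k0 cmp_def s_def u_def v_def G_def by (cases bl) (auto simp: err_fst err_snd)
  also have "\<dots> = d$i * (-(1+\<beta>) * (s*(u$i)) + \<beta> * (s*(v$i)) + \<gamma> * (s*G))" by (simp add: algebra_simps)
  also have "\<dots> \<le> d$i * (-(1+\<beta>) * B + \<beta> * B + \<gamma> * B)"
  proof (rule mult_left_mono)
    show "0 \<le> d $ i" using dpos less_imp_le by blast
    have "\<beta> * (s*(v$i)) \<le> \<beta> * B" using b vB by (rule mult_left_mono[rotated])
    moreover have "\<gamma> * (s*G) \<le> \<gamma> * B" using g sG by (rule mult_left_mono[rotated])
    ultimately show "-(1+\<beta>) * (s*(u$i)) + \<beta> * (s*(v$i)) + \<gamma> * (s*G) \<le> -(1+\<beta>) * B + \<beta> * B + \<gamma> * B"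
      using uB by simp
  qed
  also have "\<dots> = -(d $ snd (snd k0)) * (1-\<gamma>) * B" unfolding k0 by (simp add: algebra_simps)
  finally show ?thesis .
qed

lemma cmp_bl: "bounded_linear (cmp k)"
  unfolding linear_conv_bounded_linear[symmetric]
  by (rule linearI) (auto simp: cmp_def algebra_simps)

lemma cmp_zero: "cmp k 0 = 0" by (simp add: cmp_def)

lemma abs_comp_le:
  assumes "\<forall>k. cmp k z \<le> B"
  shows "\<bar>fst z $ i\<bar> \<le> B" "\<bar>snd z $ i\<bar> \<le> B"
proof -
  have "cmp (True,True,i) z \<le> B" "cmp (True,False,i) z \<le> B"
       "cmp (False,True,i) z \<le> B" "cmp (False,False,i) z \<le> B" using assms by blast+
  then show "\<bar>fst z $ i\<bar> \<le> B" "\<bar>snd z $ i\<bar> \<le> B" by (auto simp: cmp_def)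
qed

lemma equil:
  fixes z :: "(real^('s::finite \<times> 'a::finite)) \<times> (real^('s \<times> 'a))"
  assumes dpos: "\<forall>i. d$i > 0" and Pn: "\<forall>i j. P $ i $ j \<ge> 0" and Pr: "\<forall>i. (\<Sum>j\<in>UNIV. P $ i $ j) = 1"
    and g: "0 \<le> \<gamma>" "\<gamma> < 1" and b: "0 \<le> \<beta>"
  shows "err_field d P \<gamma> \<beta> Qs z = 0 \<longleftrightarrow> z = 0"
proof
  assume z0: "err_field d P \<gamma> \<beta> Qs z = 0"
  define m where "m = Max (range (\<lambda>k. cmp k z))"
  have fin: "finite (range (\<lambda>k. cmp k z))" by simp
  have "m \<in> range (\<lambda>k. cmp k z)" unfolding m_def by (rule Max_in[OF fin]) simp
  then obtain k0 where k0: "cmp k0 z = m" by (metis rangeE)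
  have all: "\<forall>k. cmp k z \<le> m" unfolding m_def using Max_ge[OF fin] by auto
  have "cmp k0 (err_field d P \<gamma> \<beta> Qs z) \<le> -(d $ snd (snd k0)) * (1-\<gamma>) * m"
    by (rule core[OF dpos Pn Pr g(1) b all k0])
  then have "0 \<le> -(d $ snd (snd k0)) * (1-\<gamma>) * m" using z0 cmp_zero by metis
  moreover have "d $ snd (snd k0) * (1-\<gamma>) > 0" using dpos g by (meson diff_gt_0_iff_gt mult_pos_pos)
  ultimately have "m \<le> 0"
  proof -
    assume h1: "0 \<le> -(d $ snd (snd k0)) * (1-\<gamma>) * m" and h2: "d $ snd (snd k0) * (1-\<gamma>) > 0"
    have "(d $ snd (snd k0) * (1-\<gamma>)) * m \<le> 0" using h1 by simp
    show "m \<le> 0" proof (rule ccontr)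
      assume "\<not> m \<le> 0"
      then have "(d $ snd (snd k0) * (1-\<gamma>)) * m > 0" using h2 by simp
      then show False using \<open>(d $ snd (snd k0) * (1-\<gamma>)) * m \<le> 0\<close> by linarith
    qed
  qed
  have al0: "\<forall>k. cmp k z \<le> 0"
  proof
    fix k have "cmp k z \<le> m" using all by blast
    then show "cmp k z \<le> 0" using \<open>m \<le> 0\<close> by linarith
  qed
  have "\<forall>i. fst z $ i = 0 \<and> snd z $ i = 0"
  proof
    fix i
    have "\<bar>fst z $ i\<bar> \<le> 0" "\<bar>snd z $ i\<bar> \<le> 0" using abs_comp_le[OF al0] by auto
    then show "fst z $ i = 0 \<and> snd z $ i = 0" by simp
  qed
  then show "z = 0" by (simp add: prod_eq_iff vec_eq_iff)
next
  assume "z = 0"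
  then show "err_field d P \<gamma> \<beta> Qs z = 0" by (simp add: err_field_def Let_def zero_prod_def)
qed

lemma aux_lin: "g < (a::real) \<Longrightarrow> a + f \<le> g \<Longrightarrow> f + (a - g)/2 < 0" by (simp add: field_simps)

lemma conv:
  fixes x :: "real \<Rightarrow> (real^('s::finite \<times> 'a::finite)) \<times> (real^('s \<times> 'a))"
  assumes dpos: "\<forall>i. d$i > 0" and Pn: "\<forall>i j. P $ i $ j \<ge> 0" and Pr: "\<forall>i. (\<Sum>j\<in>UNIV. P $ i $ j) = 1"
    and g: "0 \<le> \<gamma>" "\<gamma> < 1" and b: "0 \<le> \<beta>"
    and der: "\<forall>t\<ge>0. (x has_vector_derivative err_field d P \<gamma> \<beta> Qs (x t)) (at t within {0..})"
  shows "(x \<longlongrightarrow> 0) at_top"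
proof -
  define F where "F = err_field d P \<gamma> \<beta> Qs"
  define dm where "dm = Min (range (($) d))"
  have finr: "finite (range (($) d))" by simp
  have dm0: "dm > 0" unfolding dm_def using finr dpos by (subst Min_gr_iff) auto
  have dle: "\<forall>i. dm \<le> d $ i" unfolding dm_def using Min_le[OF finr] by auto
  define c where "c = dm * (1-\<gamma>) / 2"
  have c0: "c > 0" unfolding c_def using dm0 g by simp
  define K where "K = (\<Sum>k\<in>UNIV. \<bar>cmp k (x 0)\<bar>) + 1"
  have K0: "\<forall>k. cmp k (x 0) < K"
  proof
    fix k
    have "cmp k (x 0) \<le> \<bar>cmp k (x 0)\<bar>" by simp
    also have "\<dots> \<le> (\<Sum>k\<in>UNIV. \<bar>cmp k (x 0)\<bar>)" by (rule member_le_sum) auto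
    finally show "cmp k (x 0) < K" unfolding K_def by linarith
  qed
  have Kpos: "K > 0" unfolding K_def by (simp add: add_nonneg_pos sum_nonneg)
  define bb where "bb t = K * exp (- c * t)" for t
  have bbpos: "bb t > 0" for t unfolding bb_def using Kpos by simp
  have cont: "continuous_on {0..} x"
    unfolding continuous_on_eq_continuous_within
  proof
    fix t :: real assume "t \<in> {0..}"
    then show "continuous (at t within {0..}) x"
      using der has_vector_derivative_continuous by fastforce
  qed
  have contk: "continuous_on {0..} (\<lambda>t. cmp k (x t) - bb t)" for k
    unfolding bb_def by (intro continuous_intros bounded_linear.continuous_on[OF cmp_bl cont])
  have dk: "((\<lambda>t. cmp k (x t) - bb t) has_real_derivative (cmp k (F (x t)) + c * bb t)) (at t within {0..})"
    if "t \<ge> 0" for k t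
  proof -
    have "((\<lambda>t. cmp k (x t)) has_vector_derivative cmp k (F (x t))) (at t within {0..})"
      unfolding F_def by (rule bounded_linear.has_vector_derivative[OF cmp_bl der[rule_format, OF that]])
    then have 1: "((\<lambda>t. cmp k (x t)) has_real_derivative cmp k (F (x t))) (at t within {0..})"
      by (simp add: has_real_derivative_iff_has_vector_derivative)
    have 2: "(bb has_real_derivative (- c * bb t)) (at t within {0..})"
      unfolding bb_def by (auto intro!: derivative_eq_intros)
    show ?thesis using DERIV_diff[OF 1 2] by simp
  qed
  have bound: "\<forall>t\<ge>0. \<forall>k. cmp k (x t) < bb t"
  proof (rule ccontr)
    define S where "S = {t. t \<ge> 0 \<and> (\<exists>k. 0 \<le> cmp k (x t) - bb t)}"
    assume "\<not> (\<forall>t\<ge>0. \<forall>k. cmp k (x t) < bb t)"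
    then obtain t1 k1 where "t1 \<ge> 0" "\<not> cmp k1 (x t1) < bb t1" by blast
    then have "0 \<le> cmp k1 (x t1) - bb t1" by linarith
    then have "t1 \<in> S" unfolding S_def using \<open>t1 \<ge> 0\<close> by blast
    then have Sne: "S \<noteq> {}" by blast
    have Seq: "S = (\<Union>k\<in>UNIV. {0..} \<inter> (\<lambda>t. cmp k (x t) - bb t) -` {0..})"
      unfolding S_def by blast
    have Scl: "closed S" unfolding Seq
      by (intro closed_UN ballI continuous_closed_preimage contk) auto
    have Sbd: "bdd_below S" unfolding S_def by (rule bdd_belowI[of _ 0]) auto
    define t0 where "t0 = Inf S"
    have t0S: "t0 \<in> S" unfolding t0_def by (rule closed_contains_Inf[OF Sne Sbd Scl])
    then obtain k0 where t0pos: "t0 \<ge> 0" and k0: "0 \<le> cmp k0 (x t0) - bb t0" unfolding S_def by blast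
    have t0ne: "t0 \<noteq> 0"
    proof
      assume "t0 = 0"
      moreover have "cmp k0 (x 0) < K" using K0 by blast
      ultimately show False using k0 unfolding bb_def by simp
    qed
    then have t0p: "t0 > 0" using t0pos by simp
    have lt: "cmp k (x s) - bb s < 0" if "0 \<le> s" "s < t0" for s k
    proof (rule ccontr)
      assume "\<not> cmp k (x s) - bb s < 0"
      then have "0 \<le> cmp k (x s) - bb s" by linarith
      then have "s \<in> S" unfolding S_def using that by blast
      then have "t0 \<le> s" unfolding t0_def using Sbd by (rule cInf_lower)
      then show False using that by simp
    qed
    have le: "cmp k (x t0) - bb t0 \<le> 0" for k
    proof -
      define A where "A = {0..t0} \<inter> (\<lambda>t. cmp k (x t) - bb t) -` {..0}"
      have "closed A" unfolding A_def
        by (rule continuous_closed_preimage) (auto intro: continuous_on_subset[OF contk])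
      moreover have "{0..<t0} \<subseteq> A" unfolding A_def using lt[where k=k] by (auto simp: less_imp_le)
      ultimately have "closure {0..<t0} \<subseteq> A" by (rule closure_minimal[rotated])
      then have "t0 \<in> A" using t0p by auto
      then show ?thesis unfolding A_def by simp
    qed
    have allB: "\<forall>k. cmp k (x t0) \<le> bb t0" using le by (simp add: algebra_simps)
    have eqB: "cmp k0 (x t0) = bb t0" using le[of k0] k0 by linarith
    have "cmp k0 (F (x t0)) \<le> -(d $ snd (snd k0)) * (1-\<gamma>) * bb t0"
      unfolding F_def by (rule core[OF dpos Pn Pr g(1) b allB eqB])
    also have "\<dots> \<le> - dm * (1-\<gamma>) * bb t0"
    proof -
      have "dm \<le> d $ snd (snd k0)" using dle by blast
      moreover have "0 \<le> (1-\<gamma>) * bb t0" using g bbpos[of t0] by simp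
      ultimately have "dm * ((1-\<gamma>) * bb t0) \<le> d $ snd (snd k0) * ((1-\<gamma>) * bb t0)"
        by (rule mult_right_mono)
      then show ?thesis by (simp add: algebra_simps)
    qed
    finally have "cmp k0 (F (x t0)) \<le> - dm * (1-\<gamma>) * bb t0" .
    have "cmp k0 (F (x t0)) + c * bb t0 < 0"
    proof -
      have p: "dm * bb t0 > 0" using dm0 bbpos[of t0] by simp
      have "\<gamma> * (dm * bb t0) < 1 * (dm * bb t0)" using g(2) p by (rule mult_strict_right_mono)
      then show "cmp k0 (F (x t0)) + c * bb t0 < 0" using \<open>cmp k0 (F (x t0)) \<le> - dm * (1-\<gamma>) * bb t0\<close>
        unfolding c_def by (simp add: algebra_simps) (rule aux_lin)
    qed
    from has_real_derivative_neg_dec_left[OF dk[OF t0pos] this]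
    obtain \<delta> where \<delta>: "\<delta> > 0" and dec: "\<forall>h>0. t0 - h \<in> {0..} \<longrightarrow> h < \<delta> \<longrightarrow>
        cmp k0 (x t0) - bb t0 < cmp k0 (x (t0 - h)) - bb (t0 - h)" by blast
    define h where "h = min \<delta> t0 / 2"
    have h: "h > 0" "h < \<delta>" "t0 - h \<ge> 0" "t0 - h < t0" unfolding h_def using \<delta> t0p by auto
    have "0 < cmp k0 (x (t0 - h)) - bb (t0 - h)" using dec h eqB by auto
    moreover have "cmp k0 (x (t0 - h)) - bb (t0 - h) < 0" using lt h by simp
    ultimately show False by simp
  qed
  define C where "C = 2 * real CARD('s \<times> 'a)"
  have nb: "norm (x t) \<le> C * bb t" if "t \<ge> 0" for t
  proof -
    have ab: "\<forall>k. cmp k (x t) \<le> bb t" using bound that less_imp_le by blast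
    have "norm (x t) \<le> norm (fst (x t)) + norm (snd (x t))"
      using norm_Pair_le[of "fst (x t)" "snd (x t)"] by simp
    also have "\<dots> \<le> (\<Sum>i\<in>UNIV. \<bar>fst (x t) $ i\<bar>) + (\<Sum>i\<in>UNIV. \<bar>snd (x t) $ i\<bar>)"
      by (intro add_mono norm_le_l1_cart)
    also have "\<dots> \<le> (\<Sum>i\<in>(UNIV::('s\<times>'a) set). bb t) + (\<Sum>i\<in>(UNIV::('s\<times>'a) set). bb t)"
      by (intro add_mono sum_mono abs_comp_le[OF ab])
    also have "\<dots> = C * bb t" unfolding C_def by simp
    finally show ?thesis .
  qed
  have lim: "((\<lambda>t. C * bb t) \<longlongrightarrow> 0) at_top"
  proof -
    have "LIM t at_top. c * t :> at_top"
      by (rule filterlim_tendsto_pos_mult_at_top[OF tendsto_const c0 filterlim_ident])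
    then have "LIM t at_top. - c * t :> at_bot"
      by (simp add: filterlim_uminus_at_bot)
    then have "((\<lambda>t. exp (- c * t)) \<longlongrightarrow> 0) at_top"
      by (rule filterlim_compose[OF exp_at_bot])
    then show ?thesis unfolding bb_def by (intro tendsto_mult_right_zero)
  qed
  show ?thesis
    by (rule Lim_null_comparison[OF _ lim]) (use nb in \<open>auto simp: eventually_at_top_linorder\<close>)
qed

lemma field_eq:
  assumes Qs_opt: "Qs = R + \<gamma> *\<^sub>R (P *v Mmax Qs)"
  shows "qab_field d P R \<gamma> \<beta> (a, b) = err_field d P \<gamma> \<beta> Qs (a - Qs, b - Qs)"
proof -
  have R: "R = Qs - \<gamma> *\<^sub>R (P *v Mmax Qs)" using Qs_opt by (simp add: algebra_simps)
  show ?thesis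
    unfolding qab_field_def err_field_def Let_def R
    by (simp add: prod_eq_iff vec_eq_iff diag_mv matrix_vector_mult_diff_distrib, simp add: algebra_simps)
qed

theorem mainTheorem19:
  fixes d R Qs :: "real^('s::finite \<times> 'a::finite)"
    and P :: "real^'s^('s \<times> 'a)"
    and \<gamma> \<beta> :: real
  assumes d_pos: "\<forall>i. d $ i > 0"
    and d_sum: "(\<Sum>i\<in>UNIV. d $ i) = 1"
    and P_nonneg: "\<forall>i j. P $ i $ j \<ge> 0"
    and P_rows: "\<forall>i. (\<Sum>j\<in>UNIV. P $ i $ j) = 1"
    and gamma: "0 \<le> \<gamma>" "\<gamma> < 1"
    and Qs_opt: "Qs = R + \<gamma> *\<^sub>R (P *v Mmax Qs)"
    and beta: "\<beta> > 0"
  shows "(\<forall>z. err_field d P \<gamma> \<beta> Qs z = 0 \<longleftrightarrow> z = 0)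
    \<and> (\<forall>x :: real \<Rightarrow> (real^('s \<times> 'a)) \<times> (real^('s \<times> 'a)).
          (\<forall>t\<ge>0. (x has_vector_derivative err_field d P \<gamma> \<beta> Qs (x t)) (at t within {0..}))
          \<longrightarrow> (x \<longlongrightarrow> 0) at_top)
    \<and> (\<forall>QA QB :: real \<Rightarrow> real^('s \<times> 'a).
          (\<forall>t\<ge>0. ((\<lambda>t. (QA t, QB t)) has_vector_derivative
                     qab_field d P R \<gamma> \<beta> (QA t, QB t)) (at t within {0..}))
          \<longrightarrow> ((\<lambda>t. (QA t, QB t)) \<longlongrightarrow> (Qs, Qs)) at_top)"
proof (intro conjI allI impI)
  have b: "0 \<le> \<beta>" using beta by simp
  fix z show "err_field d P \<gamma> \<beta> Qs z = 0 \<longleftrightarrow> z = 0"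
    by (rule equil[OF d_pos P_nonneg P_rows gamma b])
next
  have b: "0 \<le> \<beta>" using beta by simp
  fix x :: "real \<Rightarrow> (real^('s \<times> 'a)) \<times> (real^('s \<times> 'a))"
  assume "\<forall>t\<ge>0. (x has_vector_derivative err_field d P \<gamma> \<beta> Qs (x t)) (at t within {0..})"
  then show "(x \<longlongrightarrow> 0) at_top" by (rule conv[OF d_pos P_nonneg P_rows gamma b])
next
  have b: "0 \<le> \<beta>" using beta by simp
  fix QA QB :: "real \<Rightarrow> real^('s \<times> 'a)"
  assume h: "\<forall>t\<ge>0. ((\<lambda>t. (QA t, QB t)) has_vector_derivative
                     qab_field d P R \<gamma> \<beta> (QA t, QB t)) (at t within {0..})"
  define x where "x t = (QA t - Qs, QB t - Qs)" for t
  have xe: "x = (\<lambda>t. (QA t, QB t) - (Qs, Qs))" unfolding x_def by auto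
  have "\<forall>t\<ge>0. (x has_vector_derivative err_field d P \<gamma> \<beta> Qs (x t)) (at t within {0..})"
  proof (intro allI impI)
    fix t :: real assume t: "t \<ge> 0"
    have "((\<lambda>t. (QA t, QB t) - (Qs, Qs)) has_vector_derivative qab_field d P R \<gamma> \<beta> (QA t, QB t))
          (at t within {0..})"
      unfolding has_vector_derivative_diff_const using h t by blast
    then show "(x has_vector_derivative err_field d P \<gamma> \<beta> Qs (x t)) (at t within {0..})"
      unfolding xe using field_eq[OF Qs_opt] by (simp add: x_def)
  qed
  then have "(x \<longlongrightarrow> 0) at_top" by (rule conv[OF d_pos P_nonneg P_rows gamma b])
  then have "((\<lambda>t. x t + (Qs, Qs)) \<longlongrightarrow> 0 + (Qs, Qs)) at_top" by (intro tendsto_add tendsto_const)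
  then show "((\<lambda>t. (QA t, QB t)) \<longlongrightarrow> (Qs, Qs)) at_top" by (simp add: x_def)
qed
end
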